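(* Let $\Omega := \{0,1\}^{\mathbb{Z}}$ and let $\tau:\Omega\to\Omega$ be the shift defined by $(\tau\omega)(x) := \omega(x-1)$ for $\omega\in\Omega$, $x\in\mathbb{Z}$; for $A\subseteq\Omega$ write $\tau A := \{\tau\omega : \omega\in A\}$. Let $\mathcal{F}$ be a $\sigma$-algebra on $\Omega$ that contains all singletons and is closed under the shift (that is, $A\in\mathcal{F}$ implies $\tau A\in\mathcal{F}$). If there exists a measure $\mu$ on $\mathcal{F}$ that is shift-invariant (that is, $\mu=\mu\circ\tau$), satisfies $\mu(\Omega)\in(0,\infty)$, and satisfies $\mu(\{\omega\})=0$ for all $\omega\in\Omega$, then $\mathcal{F}$ does not contain all subsets of $\Omega$.
   Context: The axiom of choice (in the form of the well-ordering principle) is assumed. *)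

theory Defs
  imports "HOL-Analysis.Analysis"
begin

definition shift :: "(int \<Rightarrow> bool) \<Rightarrow> (int \<Rightarrow> bool)" where
  "shift \<omega> = (\<lambda>x. \<omega> (x - 1))"

end

theory Submission
  imports Defs
begin

definition sh :: "int \<Rightarrow> (int \<Rightarrow> bool) \<Rightarrow> (int \<Rightarrow> bool)" where
  "sh k \<omega> = (\<lambda>x. \<omega> (x - k))"

lemma sh_add: "sh k (sh l \<omega>) = sh (k + l) \<omega>"
  by (simp add: sh_def algebra_simps)

lemma sh_0[simp]: "sh 0 \<omega> = \<omega>"
  by (simp add: sh_def)

lemma sh_inj: "sh k a = sh k b \<Longrightarrow> a = b"
proof -
  assume e: "sh k a = sh k b"
  have "a = sh (-k) (sh k a)" by (simp add: sh_add)
  also have "\<dots> = sh (-k) (sh k b)" using e by simp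
  also have "\<dots> = b" by (simp add: sh_add)
  finally show "a = b" .
qed

lemma shift_sh: "shift = sh 1"
  by (auto simp: shift_def sh_def fun_eq_iff)

lemma periodic_mod:
  assumes "sh k \<omega> = \<omega>" "k > 0"
  shows "\<omega> x = \<omega> (x mod k)"
proof -
  have step: "\<omega> (y - k) = \<omega> y" for y
  proof -
    have "sh k \<omega> y = \<omega> y" using assms(1) by simp
    then show ?thesis by (simp add: sh_def)
  qed
  have up: "\<omega> (y + int j * k) = \<omega> y" for y j
  proof (induction j)
    case 0 then show ?case by simp
  next
    case (Suc j)
    have "\<omega> (y + int (Suc j) * k) = \<omega> (y + int j * k + k)" by (simp add: algebra_simps)
    also have "\<dots> = \<omega> (y + int j * k)"
      using step[of "y + int j * k + k"] unfolding add_diff_cancel_right' by (rule sym)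
    also have "\<dots> = \<omega> y" using Suc by simp
    finally show ?case .
  qed
  have down: "\<omega> (y - int j * k) = \<omega> y" for y j
    using up[of "y - int j * k" j] by simp
  have gen: "\<omega> (y + j * k) = \<omega> y" for y j
  proof (cases "j \<ge> 0")
    case True then show ?thesis using up[of y "nat j"] by simp
  next
    case False then show ?thesis using down[of y "nat (-j)"] by simp
  qed
  have "x mod k = x + (- (x div k)) * k" by (simp add: minus_div_mult_eq_mod[symmetric] algebra_simps)
  then have "\<omega> (x mod k) = \<omega> x" using gen[of x "- (x div k)"] by (simp only:)
  then show ?thesis by (rule sym)
qed

lemma countable_per: "countable {\<omega>. \<exists>k. k \<noteq> 0 \<and> sh k \<omega> = \<omega>}"
proof -
  let ?f = "\<lambda>(n::nat) (xs::bool list). (\<lambda>x::int. xs ! nat (x mod int (Suc n)))"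
  have "{\<omega>. \<exists>k. k \<noteq> 0 \<and> sh k \<omega> = \<omega>} \<subseteq> (\<Union>n. range (?f n))"
  proof
    fix \<omega> assume "\<omega> \<in> {\<omega>. \<exists>k. k \<noteq> 0 \<and> sh k \<omega> = \<omega>}"
    then obtain k where k: "k \<noteq> 0" "sh k \<omega> = \<omega>" by auto
    have "\<exists>k>0. sh k \<omega> = \<omega>"
    proof (cases "k > 0")
      case True then show ?thesis using k by auto
    next
      case False
      have "sh (-k) \<omega> = sh (-k) (sh k \<omega>)" using k by simp
      also have "\<dots> = \<omega>" by (simp add: sh_add)
      finally show ?thesis using False k by (intro exI[of _ "-k"]) auto
    qed
    then obtain p where p: "p > 0" "sh p \<omega> = \<omega>" by auto
    define n where "n = nat p - 1"
    have pn: "p = int (Suc n)" using p n_def by simp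
    let ?xs = "map (\<lambda>i. \<omega> (int i)) [0..<Suc n]"
    have "?f n ?xs = \<omega>"
    proof
      fix x
      have "0 \<le> x mod int (Suc n)" "x mod int (Suc n) < int (Suc n)" by auto
      then have "nat (x mod int (Suc n)) < Suc n" by linarith
      then have "?f n ?xs x = \<omega> (int (nat (x mod int (Suc n))))"
      proof -
        assume m: "nat (x mod int (Suc n)) < Suc n"
        have l: "length [0..<Suc n] = Suc n" by (rule length_upt[THEN trans]) simp
        have a: "?xs ! nat (x mod int (Suc n)) = (\<lambda>i. \<omega> (int i)) ([0..<Suc n] ! nat (x mod int (Suc n)))"
          by (rule nth_map) (simp only: l m)
        have b: "[0..<Suc n] ! nat (x mod int (Suc n)) = 0 + nat (x mod int (Suc n))"
          by (rule nth_upt) (simp only: m add_0)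
        show ?thesis using a b by (simp only: add_0)
      qed
      also have "int (nat (x mod int (Suc n))) = x mod int (Suc n)" by simp
      finally have "?f n ?xs x = \<omega> (x mod int (Suc n))" .
      also have "\<dots> = \<omega> x" using periodic_mod[OF p(2) p(1), of x] pn by simp
      finally show "?f n ?xs x = \<omega> x" .
    qed
    then have "\<omega> = ?f n ?xs" by (rule sym)
    then have "\<omega> \<in> range (?f n)" by (rule range_eqI)
    then show "\<omega> \<in> (\<Union>n. range (?f n))" by (rule UN_I[OF UNIV_I])
  qed
  moreover have "countable (\<Union>n. range (?f n))" by simp
  ultimately show ?thesis by (rule countable_subset)
qed

lemma ennreal_contra:
  fixes c U :: ennreal
  assumes "\<And>n. of_nat n * c \<le> U" "c < \<infinity>" "c \<noteq> 0" "U < \<infinity>"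
  shows False
proof -
  obtain r where r: "c = ennreal r" "r \<ge> 0" using assms(2) ennreal_cases[of c] by force
  obtain R where R: "U = ennreal R" "R \<ge> 0" using assms(4) ennreal_cases[of U] by force
  have rp: "r > 0" using r assms(3) by (metis ennreal_0 le_less)
  obtain n :: nat where n: "R / r < n" using reals_Archimedean2 by blast
  have "of_nat n * c = ennreal (real n * r)"
    using r by (simp add: ennreal_mult' ennreal_of_nat_eq_real_of_nat)
  then have "ennreal (real n * r) \<le> ennreal R" using assms(1)[of n] R by simp
  then have "real n * r \<le> R" using R by (simp add: ennreal_le_iff)
  moreover have "R < real n * r" using n rp by (simp add: divide_less_eq)
  ultimately show False by simp
qed

theorem theorem1:
  fixes M :: "(int \<Rightarrow> bool) measure"
  assumes "space M = UNIV"
    and "\<forall>\<omega>. {\<omega>} \<in> sets M"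
    and "\<forall>A\<in>sets M. shift ` A \<in> sets M"
    and "\<forall>A\<in>sets M. emeasure M A = emeasure M (shift ` A)"
    and "0 < emeasure M UNIV" and "emeasure M UNIV < \<infinity>"
    and "\<forall>\<omega>. emeasure M {\<omega>} = 0"
  shows "sets M \<noteq> Pow UNIV"
proof
  assume S: "sets M = Pow UNIV"
  have meas: "A \<in> sets M" for A using S by auto
  have inv1: "emeasure M (sh 1 ` A) = emeasure M A" for A
  proof -
    have "emeasure M A = emeasure M (shift ` A)" using assms(4) meas by blast
    then show ?thesis by (simp add: shift_sh)
  qed
  have invn: "emeasure M (sh (int n) ` A) = emeasure M A" for n A
  proof (induction n arbitrary: A)
    case 0 then show ?case by simp
  next
    case (Suc n)
    have "sh (int (Suc n)) ` A = sh 1 ` (sh (int n) ` A)"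
      by (simp add: image_image sh_add)
    then show ?case using inv1 Suc by simp
  qed
  have inv: "emeasure M (sh k ` A) = emeasure M A" for k A
  proof (cases "k \<ge> 0")
    case True then show ?thesis using invn[of "nat k"] by simp
  next
    case False
    have z: "int (nat (-k)) + k = 0" using False by simp
    have e1: "sh (int (nat (-k))) ` (sh k ` A) = sh (int (nat (-k)) + k) ` A"
      by (simp only: image_image sh_add)
    have "sh 0 = (\<lambda>x. x)" by (rule ext) simp
    then have "A = sh (int (nat (-k))) ` (sh k ` A)"
      unfolding e1 z by simp
    then show ?thesis using invn[of "nat (-k)" "sh k ` A"] by simp
  qed
  define Per where "Per = {\<omega>. \<exists>k. k \<noteq> 0 \<and> sh k \<omega> = \<omega>}"
  define N where "N = - Per"
  define orb where "orb \<omega> = range (\<lambda>k. sh k \<omega>)" for \<omega>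
  define rep where "rep \<omega> = (SOME \<eta>. \<eta> \<in> orb \<omega>)" for \<omega>
  define V where "V = rep ` N"
  have rep_in: "rep \<omega> \<in> orb \<omega>" for \<omega>
  proof -
    have "\<omega> \<in> orb \<omega>" unfolding orb_def using rangeI[of "\<lambda>k. sh k \<omega>" 0] by simp
    then show ?thesis unfolding rep_def by (rule someI[of "\<lambda>\<eta>. \<eta> \<in> orb \<omega>" \<omega>])
  qed
  have orb_sh: "orb (sh j \<omega>) = orb \<omega>" for j \<omega>
  proof (rule set_eqI, rule iffI)
    fix x assume "x \<in> orb (sh j \<omega>)"
    then obtain k where "x = sh k (sh j \<omega>)" by (auto simp: orb_def)
    then have "x = sh (k+j) \<omega>" by (simp add: sh_add)
    then show "x \<in> orb \<omega>" by (simp add: orb_def)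
  next
    fix x assume "x \<in> orb \<omega>"
    then obtain k where "x = sh k \<omega>" by (auto simp: orb_def)
    then have "x = sh (k-j) (sh j \<omega>)" by (simp add: sh_add)
    then show "x \<in> orb (sh j \<omega>)" by (simp add: orb_def)
  qed
  have N_sh: "sh j \<omega> \<in> N \<longleftrightarrow> \<omega> \<in> N" for j \<omega>
  proof -
    have "sh k (sh j \<omega>) = sh j \<omega> \<longleftrightarrow> sh k \<omega> = \<omega>" for k
    proof -
      have c: "sh k (sh j \<omega>) = sh j (sh k \<omega>)" by (simp add: sh_add add.commute)
      show ?thesis unfolding c using sh_inj[of j "sh k \<omega>" \<omega>] by auto
    qed
    then show ?thesis by (auto simp: N_def Per_def)
  qed
  have rep_sh: "\<exists>j. rep \<omega> = sh j \<omega>" for \<omega> using rep_in[of \<omega>] by (auto simp: orb_def)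
  have V_N: "V \<subseteq> N"
  proof
    fix x assume "x \<in> V"
    then obtain a where a: "a \<in> N" "x = rep a" by (auto simp: V_def)
    obtain j where "rep a = sh j a" using rep_sh by blast
    then show "x \<in> N" using a N_sh by simp
  qed
  have orb_rep: "orb (rep a) = orb a" for a
  proof -
    obtain j where "rep a = sh j a" using rep_sh by blast
    then show ?thesis using orb_sh by simp
  qed
  have cover: "N = (\<Union>k. sh k ` V)"
  proof
    show "N \<subseteq> (\<Union>k. sh k ` V)"
    proof
      fix \<omega> assume w: "\<omega> \<in> N"
      obtain j where j: "rep \<omega> = sh j \<omega>" using rep_sh by blast
      have "\<omega> = sh (-j) (rep \<omega>)" using j by (simp add: sh_add)
      then show "\<omega> \<in> (\<Union>k. sh k ` V)" using w by (auto simp: V_def)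
    qed
    show "(\<Union>k. sh k ` V) \<subseteq> N" using V_N N_sh by auto
  qed
  have rep_orb: "orb a = orb b \<Longrightarrow> rep a = rep b" for a b by (simp add: rep_def)
  have disj: "sh k ` V \<inter> sh l ` V = {}" if "k \<noteq> l" for k l
  proof (rule ccontr)
    assume "sh k ` V \<inter> sh l ` V \<noteq> {}"
    then obtain a b where ab: "a \<in> N" "b \<in> N" "sh k (rep a) = sh l (rep b)"
      by (auto simp: V_def)
    have e: "rep a = sh (l - k) (rep b)"
      using arg_cong[OF ab(3), of "sh (-k)"] by (simp add: sh_add)
    have "orb (rep a) = orb (rep b)" using e orb_sh by simp
    then have "orb a = orb b" using orb_rep by simp
    then have "rep a = rep b" by (rule rep_orb)
    then have "sh (l - k) (rep b) = rep b" using e by simp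
    moreover have "rep b \<in> N" using ab(2) V_N by (auto simp: V_def)
    moreover have "\<forall>j. j \<noteq> 0 \<longrightarrow> sh j (rep b) \<noteq> rep b" using calculation(2) by (auto simp: N_def Per_def)
    moreover have "l - k \<noteq> 0" using that by simp
    ultimately show False by blast
  qed
  have Per_null: "Per \<in> null_sets M"
  proof -
    have "(\<Union>i\<in>Per. {i}) \<in> null_sets M"
      using countable_per assms(7) meas by (intro null_sets_UN') (auto simp: Per_def)
    then show ?thesis by simp
  qed
  have "emeasure M UNIV = emeasure M (N \<union> Per)" by (simp add: N_def)
  also have "\<dots> = emeasure M N" by (rule emeasure_Un_null_set[OF meas Per_null])
  finally have MN: "emeasure M N = emeasure M UNIV" by simp
  show False
  proof (cases "emeasure M V = 0")
    case True
    have "(\<Union>k\<in>UNIV. sh k ` V) \<in> null_sets M"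
      using True inv meas by (intro null_sets_UN') auto
    then have "N \<in> null_sets M" using cover by simp
    then have "emeasure M N = 0" by (rule null_setsD1)
    then show False using MN assms(5) by simp
  next
    case False
    let ?A = "\<lambda>n::nat. sh (int n) ` V"
    have dA: "disjoint_family ?A" unfolding disjoint_family_on_def using disj by auto
    have "(\<Sum>i. emeasure M (?A i)) = emeasure M (\<Union>i. ?A i)"
      using dA meas by (intro suminf_emeasure) auto
    also have "\<dots> \<le> emeasure M UNIV" by (rule emeasure_mono) (auto simp: meas)
    finally have le: "(\<Sum>i::nat. emeasure M V) \<le> emeasure M UNIV" using invn by simp
    have "of_nat n * emeasure M V \<le> emeasure M UNIV" for n
    proof -
      have "of_nat n * emeasure M V = (\<Sum>i<n. emeasure M V)" by simp
      also have "\<dots> \<le> (\<Sum>i. emeasure M V)" by (rule sum_le_suminf) auto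
      finally show ?thesis using le by simp
    qed
    moreover have "emeasure M V < \<infinity>"
    proof -
      have "emeasure M V \<le> emeasure M UNIV" by (rule emeasure_mono) (auto simp: meas)
      then show ?thesis using assms(6) by (rule le_less_trans)
    qed
    moreover note False assms(6)
    ultimately show False by (rule ennreal_contra)
  qed
qed

end
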